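(* For every $m\ge1$ and every $\theta\in(0,1]$, $\lim_{n\to\infty}\rho(\mathrm{IRV},m,n,\theta)=0$. Equivalently, the critical value of IRV in the Perturbed Culture model is $\theta_c(\mathrm{IRV},m)=0$.
   Context: A ranking is a strict total order on the candidates. A discrete profile consists of candidates, $n$ voters and a ranking $P_v$ per voter. For a set $K$ of candidates, $P_K$ restricts each ranking to $K$; the Plurality score $s_{\mathrm{Plu}}(c,P)$ is the number of voters ranking $c$ first. IRV: starting from all candidates, repeatedly eliminate a remaining candidate with minimal Plurality score in the profile restricted to the remaining candidates (ties broken by an arbitrary fixed rule); the last remaining candidate wins. CM: a rule $f$ is coalitionally manipulable in a discrete profile $P$ if there is a discrete $Q$ with the same candidates and voters such that $f(Q)\neq f(P)$ and every voter $v$ with $Q_v\ne P_v$ prefers $f(Q)$ to $f(P)$ according to $P_v$. Perturbed Culture ($m,n\ge1$, $\theta\in(0,1]$): random discrete profile with candidates $\{1,\dots,m\}$, voters $\{1,\dots,n\}$, each voter independently having ranking $1\succ\cdots\succ m$ with probability $\theta$ and a uniformly random ranking with probability $1-\theta$. $\rho(f,m,n,\theta)$: probability that $f$ is CM in the random profile. For a rule $f$, the critical value $\theta_c(f,m)$ (when it exists) is the common value of $\theta_l$, the largest value in $[0,1]$ such that $\theta<\theta_l$ implies $\lim_n\rho=1$, and $\theta_u$, the smallest value in $[0,1]$ such that $\theta>\theta_u$ implies $\lim_n\rho=0$. *)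

theory Defs
  imports Complex_Main
begin

text \<open>A ranking is a list containing each
candidate exactly once, most preferred first.\<close>

definition rankings :: "nat \<Rightarrow> nat list set" where
  "rankings m = {r. distinct r \<and> set r = {1..m}}"

definition profiles :: "nat \<Rightarrow> nat \<Rightarrow> nat list list set" where
  "profiles m n = {P. length P = n \<and> set P \<subseteq> rankings m}"

definition prefers :: "nat list \<Rightarrow> nat \<Rightarrow> nat \<Rightarrow> bool" where
  "prefers r a b \<longleftrightarrow> (\<exists>i j. i < j \<and> j < length r \<and> r ! i = a \<and> r ! j = b)"

definition plu_score :: "nat list list \<Rightarrow> nat set \<Rightarrow> nat \<Rightarrow> nat" where
  "plu_score P K c = card {v. v < length P \<and> hd (filter (\<lambda>d. d \<in> K) (P ! v)) = c}"

definition plu_losers :: "nat list list \<Rightarrow> nat set \<Rightarrow> nat set" where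
  "plu_losers P K = {c \<in> K. \<forall>d \<in> K. plu_score P K c \<le> plu_score P K d}"

text \<open>IRV with a fixed tie-breaking rule tb: tb K T is the candidate eliminated
among the tied candidates T (with minimal score) when K remains.
The first argument is fuel (at least the number of candidates suffices).\<close>
fun irv_aux :: "(nat set \<Rightarrow> nat set \<Rightarrow> nat) \<Rightarrow> nat list list \<Rightarrow> nat \<Rightarrow> nat set \<Rightarrow> nat" where
  "irv_aux tb P 0 K = (SOME c. c \<in> K)"
| "irv_aux tb P (Suc k) K =
     (if card K \<le> 1 then (SOME c. c \<in> K)
      else irv_aux tb P k (K - {tb K (plu_losers P K)}))"

definition IRV :: "(nat set \<Rightarrow> nat set \<Rightarrow> nat) \<Rightarrow> nat \<Rightarrow> nat list list \<Rightarrow> nat" where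
  "IRV tb m P = irv_aux tb P m {1..m}"

definition CM :: "(nat list list \<Rightarrow> nat) \<Rightarrow> nat \<Rightarrow> nat list list \<Rightarrow> bool" where
  "CM f m P \<longleftrightarrow> (\<exists>Q \<in> profiles m (length P). f Q \<noteq> f P \<and>
      (\<forall>v < length P. Q ! v \<noteq> P ! v \<longrightarrow> prefers (P ! v) (f Q) (f P)))"

definition pc_weight :: "nat \<Rightarrow> real \<Rightarrow> nat list \<Rightarrow> real" where
  "pc_weight m \<theta> r = \<theta> * (if r = [1..<m+1] then 1 else 0) + (1 - \<theta>) / real (card (rankings m))"

definition rho :: "(nat list list \<Rightarrow> nat) \<Rightarrow> nat \<Rightarrow> nat \<Rightarrow> real \<Rightarrow> real" where
  "rho f m n \<theta> = (\<Sum>P \<in> {P \<in> profiles m n. CM f m P}. \<Prod>v<n. pc_weight m \<theta> (P ! v))"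

end

theory Submission
  imports Defs
begin


lemma finite_rankings: "finite (rankings m)"
proof -
  have "rankings m \<subseteq> {xs. set xs \<subseteq> {1..m} \<and> length xs = m}"
    by (auto simp: rankings_def dest: distinct_card)
  then show ?thesis using finite_lists_length_eq[of "{1..m}" m] finite_subset by blast
qed

lemma finite_profiles: "finite (profiles m n)"
proof -
  have "profiles m n = {xs. set xs \<subseteq> rankings m \<and> length xs = n}"
    by (auto simp: profiles_def)
  then show ?thesis using finite_lists_length_eq[OF finite_rankings] by simp
qed

lemma id_rankings: "[1..<m+1] \<in> rankings m"
  by (auto simp: rankings_def)

lemma rankings_nonempty: "card (rankings m) > 0"
  using finite_rankings id_rankings card_gt_0_iff by blast

lemma profiles_0: "profiles m 0 = {[]}"
  by (auto simp: profiles_def)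

lemma profiles_Suc: "profiles m (Suc n) = (\<lambda>(r,P). r # P) ` (rankings m \<times> profiles m n)"
proof (rule set_eqI, rule iffI)
  fix P assume "P \<in> profiles m (Suc n)"
  then obtain r Q where "P = r # Q" "r \<in> rankings m" "Q \<in> profiles m n"
    by (cases P) (auto simp: profiles_def)
  then show "P \<in> (\<lambda>(r,P). r # P) ` (rankings m \<times> profiles m n)" by force
qed (auto simp: profiles_def)

definition Wt :: "nat \<Rightarrow> real \<Rightarrow> nat \<Rightarrow> (nat list list \<Rightarrow> real) \<Rightarrow> real" where
  "Wt m \<theta> n F = (\<Sum>P\<in>profiles m n. (\<Prod>v<n. pc_weight m \<theta> (P ! v)) * F P)"

lemma Wt_0: "Wt m \<theta> 0 F = F []"
  by (simp add: Wt_def profiles_0)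

lemma Wt_Suc: "Wt m \<theta> (Suc n) F = (\<Sum>r\<in>rankings m. pc_weight m \<theta> r * Wt m \<theta> n (\<lambda>P. F (r # P)))"
proof -
  have inj: "inj_on (\<lambda>(r,P). r # P) (rankings m \<times> profiles m n)"
    by (auto simp: inj_on_def)
  have "Wt m \<theta> (Suc n) F = (\<Sum>(r,P)\<in>rankings m \<times> profiles m n.
          (\<Prod>v<Suc n. pc_weight m \<theta> ((r # P) ! v)) * F (r # P))"
    unfolding Wt_def profiles_Suc by (subst sum.reindex[OF inj]) (simp add: case_prod_unfold)
  also have "\<dots> = (\<Sum>r\<in>rankings m. \<Sum>P\<in>profiles m n.
          pc_weight m \<theta> r * ((\<Prod>v<n. pc_weight m \<theta> (P ! v)) * F (r # P)))"
    by (subst sum.cartesian_product[symmetric]) (simp only: prod.lessThan_Suc_shift nth_Cons_0 nth_Cons_Suc mult_ac)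
  also have "\<dots> = (\<Sum>r\<in>rankings m. pc_weight m \<theta> r * Wt m \<theta> n (\<lambda>P. F (r # P)))"
    by (simp add: Wt_def sum_distrib_left)
  finally show ?thesis .
qed

lemma weights_sum: "(\<Sum>r\<in>rankings m. pc_weight m \<theta> r) = 1"
proof -
  have "(\<Sum>r\<in>rankings m. pc_weight m \<theta> r) =
     (\<Sum>r\<in>rankings m. \<theta> * (if r = [1..<m+1] then 1 else 0)) + (\<Sum>r\<in>rankings m. (1 - \<theta>) / real (card (rankings m)))"
    unfolding pc_weight_def by (rule sum.distrib)
  also have "\<dots> = \<theta> + (1 - \<theta>)"
  proof -
    have "(\<Sum>r\<in>rankings m. \<theta> * (if r = [1..<m+1] then 1 else 0)) = \<theta>"
      using id_rankings[of m] finite_rankings[of m]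
      by (simp only: mult_zero_right mult_1_right if_distrib[of "(*) \<theta>"] sum.delta if_True)
    moreover have "(\<Sum>r\<in>rankings m. (1 - \<theta>) / real (card (rankings m))) = 1 - \<theta>"
      using rankings_nonempty[of m] by simp
    ultimately show ?thesis by simp
  qed
  finally show ?thesis by simp
qed

lemma Wt_lin: "Wt m \<theta> n (\<lambda>P. a + b * G P + H P) = a * Wt m \<theta> n (\<lambda>_. 1) + b * Wt m \<theta> n G + Wt m \<theta> n H"
  unfolding Wt_def by (simp add: sum.distrib sum_distrib_left algebra_simps)

lemma Wt_one: "Wt m \<theta> n (\<lambda>_. 1) = 1"
  by (induction n) (simp_all add: Wt_0 Wt_Suc weights_sum)

definition Xk :: "nat set \<Rightarrow> nat list \<Rightarrow> real" where
  "Xk K r = (if hd (filter (\<lambda>d. d \<in> K) r) = 1 then 1 else 0)"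
definition Sk :: "nat set \<Rightarrow> nat list list \<Rightarrow> real" where
  "Sk K P = (\<Sum>v<length P. Xk K (P ! v))"
definition pk :: "nat \<Rightarrow> real \<Rightarrow> nat set \<Rightarrow> real" where
  "pk m \<theta> K = (\<Sum>r\<in>rankings m. pc_weight m \<theta> r * Xk K r)"
definition Vk :: "nat \<Rightarrow> real \<Rightarrow> nat set \<Rightarrow> real" where
  "Vk m \<theta> K = (\<Sum>r\<in>rankings m. pc_weight m \<theta> r * (Xk K r - pk m \<theta> K)^2)"

lemma Sk_Cons: "Sk K (r # P) = Xk K r + Sk K P"
  unfolding Sk_def by (simp only: length_Cons sum.lessThan_Suc_shift nth_Cons_0 nth_Cons_Suc)

lemma Sk_plu: "Sk K P = real (plu_score P K 1)"
proof -
  have "{v. v < length P \<and> hd (filter (\<lambda>d. d \<in> K) (P ! v)) = 1} = {v\<in>{..<length P}. hd (filter (\<lambda>d. d \<in> K) (P ! v)) = 1}" by auto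
  then show ?thesis
    unfolding plu_score_def Sk_def Xk_def real_of_card by (simp only: sum.inter_filter[OF finite_lessThan])
qed

lemma E1: "Wt m \<theta> n (Sk K) = real n * pk m \<theta> K"
proof (induction n)
  case 0 then show ?case by (simp add: Wt_0 Sk_def)
next
  case (Suc n)
  have "Wt m \<theta> (Suc n) (Sk K) = (\<Sum>r\<in>rankings m. pc_weight m \<theta> r * (Xk K r + real n * pk m \<theta> K))"
    using Wt_lin[of m \<theta> n "Xk K _" 0 "\<lambda>_. 0" "Sk K"] Suc
    by (simp add: Wt_Suc Sk_Cons Wt_one)
  also have "\<dots> = pk m \<theta> K + real n * pk m \<theta> K"
    by (simp add: distrib_left sum.distrib pk_def sum_distrib_right[symmetric] weights_sum)
  finally show ?case by (simp add: algebra_simps)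
qed

lemma E2: "Wt m \<theta> n (\<lambda>P. (Sk K P - real n * pk m \<theta> K)^2) = real n * Vk m \<theta> K"
proof (induction n)
  case 0 then show ?case by (simp add: Wt_0 Sk_def)
next
  case (Suc n)
  define p where "p = pk m \<theta> K"
  have eq: "\<And>r P. (Sk K (r # P) - real (Suc n) * p)^2 =
     (Xk K r - p)^2 + (2 * (Xk K r - p)) * (Sk K P - real n * p) + (Sk K P - real n * p)^2"
    by (simp add: Sk_Cons power2_eq_square algebra_simps)
  have lin0: "Wt m \<theta> n (\<lambda>P. Sk K P - real n * p) = 0"
    using Wt_lin[of m \<theta> n "- real n * p" 1 "\<lambda>_. 0" "Sk K"] E1[of m \<theta> n K]
    by (simp add: Wt_one p_def Wt_def)
  have "Wt m \<theta> (Suc n) (\<lambda>P. (Sk K P - real (Suc n) * p)^2) =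
     (\<Sum>r\<in>rankings m. pc_weight m \<theta> r * ((Xk K r - p)^2 + real n * Vk m \<theta> K))"
    unfolding Wt_Suc eq
    using Wt_lin[of m \<theta> n "(Xk K _ - p)^2" "2 * (Xk K _ - p)" "\<lambda>P. Sk K P - real n * p" "\<lambda>P. (Sk K P - real n * p)^2"]
      Suc lin0 by (simp add: Wt_one p_def)
  also have "\<dots> = Vk m \<theta> K + real n * Vk m \<theta> K"
    by (simp add: distrib_left sum.distrib Vk_def p_def sum_distrib_right[symmetric] weights_sum)
  finally show ?case by (simp add: p_def algebra_simps)
qed



definition sw :: "nat \<Rightarrow> nat \<Rightarrow> nat \<Rightarrow> nat" where
  "sw a b x = (if x = a then b else if x = b then a else x)"

lemma sw_sw[simp]: "sw a b (sw a b x) = x"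
  by (simp add: sw_def)

lemma sw_mem: "a \<in> A \<Longrightarrow> b \<in> A \<Longrightarrow> (sw a b x \<in> A) = (x \<in> A)"
  by (auto simp: sw_def)

lemma inj_sw: "inj (sw a b)"
  by (metis injI sw_sw)

lemma map_sw_rankings:
  assumes "r \<in> rankings m" "a \<in> {1..m}" "b \<in> {1..m}"
  shows "map (sw a b) r \<in> rankings m"
proof -
  have "set (map (sw a b) r) = {1..m}"
  proof
    show "set (map (sw a b) r) \<subseteq> {1..m}" using assms sw_mem[of a "{1..m}" b] by (auto simp: rankings_def)
    show "{1..m} \<subseteq> set (map (sw a b) r)"
    proof
      fix x assume "x \<in> {1..m}"
      then have "sw a b x \<in> set r" using assms sw_mem[of a "{1..m}" b] by (auto simp: rankings_def)
      then show "x \<in> set (map (sw a b) r)" by (metis image_eqI set_map sw_sw)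
    qed
  qed
  moreover have "distinct (map (sw a b) r)"
    using assms inj_sw by (auto simp: rankings_def distinct_map inj_on_def)
  ultimately show ?thesis by (simp add: rankings_def)
qed

lemma filter_sw:
  assumes "a \<in> K" "b \<in> K"
  shows "filter (\<lambda>d. d \<in> K) (map (sw a b) r) = map (sw a b) (filter (\<lambda>d. d \<in> K) r)"
proof -
  have "((\<lambda>d. d \<in> K) \<circ> sw a b) = (\<lambda>d. d \<in> K)" using sw_mem[OF assms] by auto
  then show ?thesis by (simp add: filter_map)
qed

lemma filter_nonempty:
  assumes "r \<in> rankings m" "K \<subseteq> {1..m}" "c \<in> K"
  shows "filter (\<lambda>d. d \<in> K) r \<noteq> []"
  using assms by (auto simp: rankings_def filter_empty_conv)

lemma hd_sw:
  assumes "r \<in> rankings m" "K \<subseteq> {1..m}" "a \<in> K" "b \<in> K"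
  shows "hd (filter (\<lambda>d. d \<in> K) (map (sw a b) r)) = sw a b (hd (filter (\<lambda>d. d \<in> K) r))"
  using filter_sw[OF assms(3,4)] filter_nonempty[OF assms(1,2,3)] by (simp add: hd_map)

definition Rk :: "nat \<Rightarrow> nat set \<Rightarrow> nat \<Rightarrow> nat list set" where
  "Rk m K d = {r \<in> rankings m. hd (filter (\<lambda>d. d \<in> K) r) = d}"

lemma card_Rk:
  assumes "K \<subseteq> {1..m}" "1 \<in> K" "d \<in> K"
  shows "card (Rk m K d) = card (Rk m K 1)"
proof -
  have "bij_betw (map (sw 1 d)) (Rk m K 1) (Rk m K d)"
  proof (rule bij_betw_byWitness[where f' = "map (sw 1 d)"])
    have dm: "d \<in> {1..m}" "(1::nat) \<in> {1..m}" using assms by auto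
    show "map (sw 1 d) ` Rk m K 1 \<subseteq> Rk m K d"
    proof
      fix y assume "y \<in> map (sw 1 d) ` Rk m K 1"
      then obtain r where r: "r \<in> rankings m" "hd (filter (\<lambda>d. d \<in> K) r) = 1" "y = map (sw 1 d) r"
        unfolding Rk_def by blast
      have "map (sw 1 d) r \<in> rankings m" by (rule map_sw_rankings[OF r(1) dm(2) dm(1)])
      moreover have "hd (filter (\<lambda>d. d \<in> K) (map (sw 1 d) r)) = d"
        using hd_sw[OF r(1) assms(1) assms(2) assms(3)] r(2) by (simp add: sw_def)
      ultimately show "y \<in> Rk m K d" using r(3) unfolding Rk_def by blast
    qed
    show "map (sw 1 d) ` Rk m K d \<subseteq> Rk m K 1"
    proof
      fix y assume "y \<in> map (sw 1 d) ` Rk m K d"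
      then obtain r where r: "r \<in> rankings m" "hd (filter (\<lambda>d. d \<in> K) r) = d" "y = map (sw 1 d) r"
        unfolding Rk_def by blast
      have "map (sw 1 d) r \<in> rankings m" by (rule map_sw_rankings[OF r(1) dm(2) dm(1)])
      moreover have "hd (filter (\<lambda>d. d \<in> K) (map (sw 1 d) r)) = 1"
        using hd_sw[OF r(1) assms(1) assms(2) assms(3)] r(2) by (simp add: sw_def)
      ultimately show "y \<in> Rk m K 1" using r(3) unfolding Rk_def by blast
    qed
  qed (simp_all add: map_idI)
  then show ?thesis by (metis bij_betw_same_card)
qed

lemma card_rankings_K:
  assumes "K \<subseteq> {1..m}" "1 \<in> K"
  shows "card (rankings m) = card K * card (Rk m K 1)"
proof -
  have fK: "finite K" using assms finite_subset by blast
  have "rankings m = (\<Union>d\<in>K. Rk m K d)"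
  proof
    show "rankings m \<subseteq> (\<Union>d\<in>K. Rk m K d)"
    proof
      fix r assume r: "r \<in> rankings m"
      then have "hd (filter (\<lambda>d. d \<in> K) r) \<in> K"
        using filter_nonempty[OF r assms] by (metis (mono_tags) hd_in_set mem_Collect_eq set_filter)
      then show "r \<in> (\<Union>d\<in>K. Rk m K d)" using r by (auto simp: Rk_def)
    qed
  qed (auto simp: Rk_def)
  then have "card (rankings m) = (\<Sum>d\<in>K. card (Rk m K d))"
    using card_UN_disjoint[of K "Rk m K"] fK finite_rankings[of m]
    by (auto simp: Rk_def)
  also have "\<dots> = (\<Sum>d\<in>K. card (Rk m K 1))"
    using card_Rk[OF assms] by simp
  finally show ?thesis by simp
qed

lemma pk_value:
  assumes "K \<subseteq> {1..m}" "1 \<in> K"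
  shows "pk m \<theta> K = \<theta> + (1 - \<theta>) / real (card K)"
proof -
  have fK: "finite K" using assms finite_subset by blast
  have cK: "card K > 0" using fK assms card_gt_0_iff by blast
  have m1: "m \<ge> 1" using assms by auto
  have X1: "Xk K [1..<m+1] = 1"
  proof -
    have e: "[1..<m+1] = 1 # [Suc 1..<m+1]" by (rule upt_conv_Cons) (use m1 in simp)
    show ?thesis unfolding Xk_def e using assms by simp
  qed
  have "pk m \<theta> K = (\<Sum>r\<in>rankings m. \<theta> * (if r = [1..<m+1] then Xk K r else 0))
      + (\<Sum>r\<in>rankings m. (1 - \<theta>) / real (card (rankings m)) * Xk K r)"
    unfolding pk_def pc_weight_def by (simp only: sum.distrib[symmetric]) (rule sum.cong; auto simp: algebra_simps)
  also have "(\<Sum>r\<in>rankings m. \<theta> * (if r = [1..<m+1] then Xk K r else 0)) = \<theta>"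
    using id_rankings[of m] finite_rankings[of m] X1
    by (simp only: mult_zero_right if_distrib[of "(*) \<theta>"] sum.delta if_True)
  also have "(\<Sum>r\<in>rankings m. (1 - \<theta>) / real (card (rankings m)) * Xk K r)
       = (1 - \<theta>) / real (card (rankings m)) * real (card (Rk m K 1))"
  proof -
    have "(\<Sum>r\<in>rankings m. Xk K r) = real (card (Rk m K 1))"
      unfolding Xk_def Rk_def real_of_card
      by (simp only: sum.inter_filter[OF finite_rankings])
    then show ?thesis by (simp only: sum_distrib_left[symmetric])
  qed
  also have "\<dots> = (1 - \<theta>) / real (card K)"
    using card_rankings_K[OF assms] rankings_nonempty[of m] cK by (simp add: field_simps)
  finally show ?thesis .
qed



lemma diff_single_ne: "finite K \<Longrightarrow> \<not> card K \<le> 1 \<Longrightarrow> K - {x} \<noteq> {}"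
proof
  assume "finite K" "\<not> card K \<le> 1" "K - {x} = {}"
  then have "K \<subseteq> {x}" by auto
  then have "card K \<le> card {x}" by (rule card_mono[rotated]) simp
  then show False using \<open>\<not> card K \<le> 1\<close> by simp
qed

lemma single_one: "finite K \<Longrightarrow> card K \<le> 1 \<Longrightarrow> (1::nat) \<in> K \<Longrightarrow> K = {1}"
  using card_le_Suc0_iff_eq[of K] by auto

lemma irv_in: "finite K \<Longrightarrow> K \<noteq> {} \<Longrightarrow> irv_aux tb Q k K \<in> K"
proof (induction k arbitrary: K)
  case 0 then show ?case by (simp add: some_in_eq)
next
  case (Suc k)
  show ?case
  proof (cases "card K \<le> 1")
    case True then show ?thesis using Suc.prems by (simp add: some_in_eq)
  next
    case False
    let ?K' = "K - {tb K (plu_losers Q K)}"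
    have "?K' \<noteq> {}" by (rule diff_single_ne[OF Suc.prems(1) False])
    moreover have "finite ?K'" using Suc.prems by simp
    ultimately have "irv_aux tb Q k ?K' \<in> ?K'" by (metis Suc.IH)
    then show ?thesis using False by simp
  qed
qed

lemma losers_ne:
  assumes "finite K" "K \<noteq> {}"
  shows "plu_losers Q K \<noteq> {}"
proof -
  let ?f = "plu_score Q K"
  have "Min (?f ` K) \<in> ?f ` K" using assms by simp
  then obtain c where c: "c \<in> K" "?f c = Min (?f ` K)" by auto
  then have "c \<in> plu_losers Q K" using assms by (auto simp: plu_losers_def)
  then show ?thesis by auto
qed

lemma sum_scores:
  assumes "finite K"
  shows "(\<Sum>d\<in>K. plu_score Q K d) \<le> length Q"
proof -
  let ?A = "\<lambda>d. {v. v < length Q \<and> hd (filter (\<lambda>d. d \<in> K) (Q ! v)) = d}"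
  have "(\<Sum>d\<in>K. plu_score Q K d) = card (\<Union>d\<in>K. ?A d)"
    unfolding plu_score_def by (rule card_UN_disjoint[symmetric]) (use assms in auto)
  also have "\<dots> \<le> card {..<length Q}" by (rule card_mono) auto
  finally show ?thesis by simp
qed

lemma not_loser:
  assumes "finite K" "1 \<in> K" "length Q < card K * plu_score Q K 1"
  shows "1 \<notin> plu_losers Q K"
proof
  assume "1 \<in> plu_losers Q K"
  then have "\<forall>d\<in>K. plu_score Q K 1 \<le> plu_score Q K d" by (simp add: plu_losers_def)
  then have "(\<Sum>d\<in>K. plu_score Q K 1) \<le> (\<Sum>d\<in>K. plu_score Q K d)" by (intro sum_mono) auto
  then show False using sum_scores[OF assms(1), of Q] assms(3) by simp
qed

lemma run:
  assumes tb: "\<And>K T. T \<noteq> {} \<Longrightarrow> T \<subseteq> K \<Longrightarrow> tb K T \<in> T"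
    and c: "c \<noteq> 1"
    and hyp: "\<And>K. 1 \<in> K \<Longrightarrow> c \<in> K \<Longrightarrow> K \<subseteq> {1..m} \<Longrightarrow> length Q < card K * plu_score Q K 1"
  shows "1 \<in> K \<Longrightarrow> K \<subseteq> {1..m} \<Longrightarrow> card K \<le> Suc k \<Longrightarrow> irv_aux tb Q k K \<noteq> c"
proof (induction k arbitrary: K)
  case 0
  then have "finite K" using finite_subset by blast
  then have "K = {1}" using 0 single_one by simp
  then show ?case using c by simp
next
  case (Suc k)
  have fK: "finite K" using Suc.prems finite_subset by blast
  show ?case
  proof (cases "card K \<le> 1")
    case True
    then have "K = {1}" using Suc.prems fK single_one by blast
    then show ?thesis using c by simp
  next
    case False
    let ?x = "tb K (plu_losers Q K)"
    let ?K' = "K - {?x}"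
    have res: "irv_aux tb Q (Suc k) K = irv_aux tb Q k ?K'" using False by simp
    show ?thesis
    proof (cases "c \<in> K")
      case False': False
      have "?K' \<noteq> {}" by (rule diff_single_ne[OF fK False])
      then have "irv_aux tb Q k ?K' \<in> ?K'" using irv_in[of ?K' tb Q k] fK by simp
      then have "irv_aux tb Q k ?K' \<in> K" by blast
      then show ?thesis using res False' by auto
    next
      case True
      have Kne: "K \<noteq> {}" using Suc.prems by blast
      have sub: "plu_losers Q K \<subseteq> K" by (auto simp: plu_losers_def)
      have xl: "?x \<in> plu_losers Q K"
        by (rule tb[OF losers_ne[OF fK Kne] sub])
      have "length Q < card K * plu_score Q K 1" by (rule hyp[OF Suc.prems(1) True Suc.prems(2)])
      then have "1 \<notin> plu_losers Q K"
        using not_loser[OF fK Suc.prems(1)] by blast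
      then have "?x \<noteq> 1" using xl by auto
      moreover have "?x \<in> K" using xl sub by blast
      ultimately have "1 \<in> ?K'" "?K' \<subseteq> {1..m}" "card ?K' \<le> Suc k"
        using Suc.prems(1,2,3) fK by (auto simp: card_Diff_singleton)
      then show ?thesis using Suc.IH res by simp
    qed
  qed
qed

lemma not_pref:
  "distinct r \<Longrightarrow> hd (filter (\<lambda>d. d \<in> K) r) = a \<Longrightarrow> i < j \<Longrightarrow> j < length r \<Longrightarrow> r ! i \<in> K \<Longrightarrow> r ! j = a \<Longrightarrow> False"
proof (induction r arbitrary: i j)
  case Nil then show ?case by simp
next
  case (Cons x xs)
  show ?case
  proof (cases "x \<in> K")
    case True
    then have "x = a" using Cons.prems by simp
    then show ?thesis using Cons.prems by (cases j) (auto simp: nth_mem)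
  next
    case False
    have "i \<noteq> 0"
    proof
      assume "i = 0" then show False using Cons.prems False by simp
    qed
    then obtain i' j' where "i = Suc i'" "j = Suc j'" using Cons.prems(3)
      by (metis Suc_pred' gr0I less_nat_zero_code neq0_conv)
    then show ?thesis using Cons.prems Cons.IH[of i' j'] False by simp
  qed
qed

definition goodP :: "nat \<Rightarrow> nat list list \<Rightarrow> bool" where
  "goodP m P = (\<forall>K. K \<subseteq> {1..m} \<and> 1 \<in> K \<and> 2 \<le> card K \<longrightarrow> length P < card K * plu_score P K 1)"

lemma good_card:
  assumes "goodP m P" "1 \<in> K" "c \<in> K" "c \<noteq> 1" "K \<subseteq> {1..m}"
  shows "length P < card K * plu_score P K 1"
proof -
  have "finite K" using assms finite_subset by blast
  then have "card {1, c} \<le> card K" using assms by (intro card_mono) auto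
  then have "2 \<le> card K" using assms by simp
  then show ?thesis using assms by (simp add: goodP_def)
qed

lemma good_not_CM:
  assumes tb: "\<And>K T. T \<noteq> {} \<Longrightarrow> T \<subseteq> K \<Longrightarrow> tb K T \<in> T"
    and m: "m \<ge> 1" and P: "P \<in> profiles m n" and g: "goodP m P"
  shows "\<not> CM (IRV tb m) m P"
proof
  have K0: "1 \<in> {1..m}" "card {1..m} \<le> Suc m" using m by auto
  have IP: "IRV tb m P = 1"
  proof (rule ccontr)
    assume ne: "IRV tb m P \<noteq> 1"
    have "irv_aux tb P m {1..m} \<noteq> IRV tb m P"
      by (rule run[OF tb ne _ K0(1) _ K0(2)]) (use good_card[OF g _ _ ne] in auto)
    then show False by (simp add: IRV_def)
  qed
  assume "CM (IRV tb m) m P"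
  then obtain Q where Q: "Q \<in> profiles m (length P)" "IRV tb m Q \<noteq> 1"
    and man: "\<forall>v < length P. Q ! v \<noteq> P ! v \<longrightarrow> prefers (P ! v) (IRV tb m Q) 1"
    unfolding CM_def IP by blast
  define c where "c = IRV tb m Q"
  have c: "c \<noteq> 1" using Q c_def by simp
  have lQ: "length Q = length P" using Q by (simp add: profiles_def)
  have hyp: "length Q < card K * plu_score Q K 1" if K: "1 \<in> K" "c \<in> K" "K \<subseteq> {1..m}" for K
  proof -
    have "{v. v < length P \<and> hd (filter (\<lambda>d. d \<in> K) (P ! v)) = 1}
        \<subseteq> {v. v < length Q \<and> hd (filter (\<lambda>d. d \<in> K) (Q ! v)) = 1}"
    proof safe
      fix v assume v: "v < length P" "hd (filter (\<lambda>d. d \<in> K) (P ! v)) = 1"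
      show "v < length Q" using v lQ by simp
      have "Q ! v = P ! v"
      proof (rule ccontr)
        assume "Q ! v \<noteq> P ! v"
        then have "prefers (P ! v) c 1" using man v c_def by auto
        then obtain i j where "i < j" "j < length (P ! v)" "P ! v ! i = c" "P ! v ! j = 1"
          by (auto simp: prefers_def)
        moreover have "P ! v \<in> set P" using v by simp
        then have "distinct (P ! v)" using P by (auto simp: profiles_def rankings_def)
        ultimately show False using not_pref[of "P ! v" K 1] v K by auto
      qed
      then show "hd (filter (\<lambda>d. d \<in> K) (Q ! v)) = 1" using v by simp
    qed
    then have "plu_score P K 1 \<le> plu_score Q K 1"
      unfolding plu_score_def by (rule card_mono[rotated]) simp
    then have "card K * plu_score P K 1 \<le> card K * plu_score Q K 1" by simp
    then show ?thesis using good_card[OF g K(1,2) c K(3)] lQ by linarith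
  qed
  have "irv_aux tb Q m {1..m} \<noteq> c"
    by (rule run[OF tb c _ K0(1) _ K0(2)]) (use hyp in auto)
  then show False by (simp add: IRV_def c_def)
qed



lemma weight_nonneg: "0 \<le> \<theta> \<Longrightarrow> \<theta> \<le> 1 \<Longrightarrow> 0 \<le> pc_weight m \<theta> r"
  by (simp add: pc_weight_def)

lemma pi_nonneg: "0 \<le> \<theta> \<Longrightarrow> \<theta> \<le> 1 \<Longrightarrow> 0 \<le> (\<Prod>v<n. pc_weight m \<theta> (P ! v))"
  by (intro prod_nonneg) (simp add: weight_nonneg)

definition Ks :: "nat \<Rightarrow> nat set set" where
  "Ks m = {K. K \<subseteq> {1..m} \<and> 1 \<in> K \<and> 2 \<le> card K}"

lemma finite_Ks: "finite (Ks m)"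
proof -
  have "Ks m \<subseteq> Pow {1..m}" by (auto simp: Ks_def)
  then show ?thesis by (rule finite_subset) simp
qed

definition dk :: "nat \<Rightarrow> real \<Rightarrow> nat set \<Rightarrow> real" where
  "dk m \<theta> K = pk m \<theta> K - 1 / real (card K)"

lemma dk_pos:
  assumes "K \<in> Ks m" "0 < \<theta>"
  shows "0 < dk m \<theta> K"
proof -
  have K: "K \<subseteq> {1..m}" "1 \<in> K" "2 \<le> card K" using assms by (auto simp: Ks_def)
  have "dk m \<theta> K = \<theta> * (1 - 1 / real (card K))"
    using pk_value[OF K(1,2)] K(3) by (simp add: dk_def field_simps)
  moreover have "1 / real (card K) < 1" using K(3) by simp
  ultimately show ?thesis using assms(2) by simp
qed

lemma prob_bad:
  assumes K: "K \<in> Ks m" and th: "0 < \<theta>" "\<theta> \<le> 1" and n: "n > 0"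
  shows "(\<Sum>P\<in>profiles m n. (\<Prod>v<n. pc_weight m \<theta> (P ! v)) *
            (if n < card K * plu_score P K 1 then 0 else 1)) \<le> Vk m \<theta> K / (real n * dk m \<theta> K ^ 2)"
proof -
  define p where "p = pk m \<theta> K"
  define d where "d = dk m \<theta> K"
  have d: "0 < d" using dk_pos[OF K th(1)] by (simp add: d_def)
  have cK: "2 \<le> card K" using K by (simp add: Ks_def)
  have pd: "p = d + 1 / real (card K)" by (simp add: d_def dk_def p_def)
  have pw: "(if n < card K * plu_score P K 1 then 0 else 1) \<le> (Sk K P - real n * p)^2 / (real n * d)^2"
    for P
  proof (cases "n < card K * plu_score P K 1")
    case True then show ?thesis by simp
  next
    case False
    then have "real (card K) * Sk K P \<le> real n" unfolding Sk_plu by (simp flip: of_nat_mult)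
    then have "Sk K P \<le> real n / real (card K)" using cK by (simp add: field_simps)
    then have "real n * d \<le> real n * p - Sk K P" using pd by (simp add: algebra_simps)
    moreover have "0 \<le> real n * d" using d by simp
    ultimately have "(real n * d)^2 \<le> (Sk K P - real n * p)^2"
      by (metis abs_le_square_iff abs_of_nonneg abs_minus_commute order_trans abs_ge_self)
    moreover have "0 < (real n * d)^2" using d n by simp
    ultimately show ?thesis using False by simp
  qed
  have "(\<Sum>P\<in>profiles m n. (\<Prod>v<n. pc_weight m \<theta> (P ! v)) *
            (if n < card K * plu_score P K 1 then 0 else 1))
      \<le> (\<Sum>P\<in>profiles m n. (\<Prod>v<n. pc_weight m \<theta> (P ! v)) * ((Sk K P - real n * p)^2 / (real n * d)^2))"
    by (intro sum_mono mult_left_mono pw pi_nonneg) (use th in auto)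
  also have "\<dots> = Wt m \<theta> n (\<lambda>P. (Sk K P - real n * p)^2) / (real n * d)^2"
    unfolding Wt_def by (simp add: sum_divide_distrib)
  also have "\<dots> = real n * Vk m \<theta> K / (real n * d)^2"
    using E2 by (simp add: p_def)
  also have "\<dots> = Vk m \<theta> K / (real n * d ^ 2)"
    using n by (simp add: power2_eq_square field_simps)
  finally show ?thesis by (simp add: d_def)
qed

lemma rho_bound:
  assumes tb: "\<And>K T. T \<noteq> {} \<Longrightarrow> T \<subseteq> K \<Longrightarrow> tb K T \<in> T"
    and m: "m \<ge> 1" and th: "0 < \<theta>" "\<theta> \<le> 1" and n: "n > 0"
  shows "rho (IRV tb m) m n \<theta> \<le> (\<Sum>K\<in>Ks m. Vk m \<theta> K / dk m \<theta> K ^ 2) / real n"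
proof -
  let ?pi = "\<lambda>P. (\<Prod>v<n. pc_weight m \<theta> (P ! v))"
  let ?ind = "\<lambda>K P. (if n < card K * plu_score P K 1 then 0 else 1::real)"
  have "rho (IRV tb m) m n \<theta> = (\<Sum>P\<in>profiles m n. ?pi P * (if CM (IRV tb m) m P then 1 else 0))"
    unfolding rho_def by (simp add: sum.inter_filter[OF finite_profiles] if_distrib[of "(*) _"] cong: if_cong)
  also have "\<dots> \<le> (\<Sum>P\<in>profiles m n. ?pi P * (\<Sum>K\<in>Ks m. ?ind K P))"
  proof (intro sum_mono mult_left_mono)
    fix P assume P: "P \<in> profiles m n"
    show "0 \<le> ?pi P" using th by (intro pi_nonneg) auto
    show "(if CM (IRV tb m) m P then 1 else 0) \<le> (\<Sum>K\<in>Ks m. ?ind K P)"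
    proof (cases "CM (IRV tb m) m P")
      case False then show ?thesis by (simp add: sum_nonneg)
    next
      case True
      have "\<not> goodP m P"
      proof
        assume g: "goodP m P"
        from good_not_CM[OF tb m P g] True show False by contradiction
      qed
      then obtain K where K: "K \<in> Ks m" "\<not> n < card K * plu_score P K 1"
        using P by (auto simp: goodP_def Ks_def profiles_def)
      have "?ind K P \<le> (\<Sum>K\<in>Ks m. ?ind K P)"
        by (rule member_le_sum[OF K(1) _ finite_Ks]) simp
      then show ?thesis using K True by simp
    qed
  qed
  also have "\<dots> = (\<Sum>K\<in>Ks m. \<Sum>P\<in>profiles m n. ?pi P * ?ind K P)"
    by (simp add: sum_distrib_left sum.swap[of _ "Ks m"])
  also have "\<dots> \<le> (\<Sum>K\<in>Ks m. Vk m \<theta> K / (real n * dk m \<theta> K ^ 2))"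
    by (intro sum_mono prob_bad) (use th n in auto)
  also have "\<dots> = (\<Sum>K\<in>Ks m. Vk m \<theta> K / dk m \<theta> K ^ 2) / real n"
    by (simp add: sum_divide_distrib field_simps)
  finally show ?thesis .
qed

theorem theorem5p3:
  fixes m :: nat and \<theta> :: real and tb :: "nat set \<Rightarrow> nat set \<Rightarrow> nat"
  assumes "m \<ge> 1" and "0 < \<theta>" and "\<theta> \<le> 1"
    and "\<And>K T. T \<noteq> {} \<Longrightarrow> T \<subseteq> K \<Longrightarrow> tb K T \<in> T"
  shows "(\<lambda>n. rho (IRV tb m) m n \<theta>) \<longlonglongrightarrow> 0"
proof (rule tendsto_sandwich[where f = "\<lambda>_. 0" and h = "\<lambda>n. (\<Sum>K\<in>Ks m. Vk m \<theta> K / dk m \<theta> K ^ 2) / real n"])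
  show "\<forall>\<^sub>F n in sequentially. 0 \<le> rho (IRV tb m) m n \<theta>"
    unfolding rho_def using assms by (intro always_eventually allI sum_nonneg pi_nonneg) auto
  show "\<forall>\<^sub>F n in sequentially. rho (IRV tb m) m n \<theta> \<le> (\<Sum>K\<in>Ks m. Vk m \<theta> K / dk m \<theta> K ^ 2) / real n"
    using eventually_gt_at_top[of 0] by eventually_elim (rule rho_bound[OF assms(4,1,2,3)])
qed (auto intro: lim_const_over_n)

end
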